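(* Let $\mathbf{S}'=\sum_{i=1}^N\mathbf{S}'_i$ be a PBD that is in $1/\epsilon$-heavy binomial form, and let $a\in\mathbb{Z}_+$, $b\in\mathbb{Z}$. With probability at least $1-O(\sqrt{\epsilon})$, the greatest common divisor of $m=\Omega(1/\sqrt{\epsilon})$ i.i.d. draws $v_1,\dots,v_m$ from $a(\mathbf{S}'-b)$ is equal to $a$.
   Context: A PBD$_N$ is a sum of $N$ mutually independent Bernoulli random variables. A PBD$_N$ $\mathbf{S}$ is in $1/\epsilon$-heavy binomial form if $\mathbf{S}$ is $\epsilon$-close in total variation distance to some distribution $u+\mathrm{Bin}(\ell,q)$ where $u,\ell\in\{0,1,\dots,N\}$ and $\mathrm{Var}[\mathrm{Bin}(\ell,q)]=\Omega(1/\epsilon^2)$. Throughout, $\epsilon$ is assumed to be at most a sufficiently small absolute constant. *)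

theory Defs
  imports "HOL-Probability.Probability"
begin

fun pbd :: "real list \<Rightarrow> nat pmf" where
  "pbd [] = return_pmf 0"
| "pbd (p # ps) =
     bind_pmf (bernoulli_pmf p) (\<lambda>x. bind_pmf (pbd ps) (\<lambda>y. return_pmf (of_bool x + y)))"

definition tv_dist :: "'a pmf \<Rightarrow> 'a pmf \<Rightarrow> real" where
  "tv_dist P Q = (SUP A. \<bar>measure_pmf.prob P A - measure_pmf.prob Q A\<bar>)"

text \<open>S (a PBD on N summands) is in 1/eps-heavy binomial form, where the implicit
  constant of Var = Omega(1/eps^2) is c0.\<close>
definition heavy_binomial_form :: "real \<Rightarrow> real \<Rightarrow> nat \<Rightarrow> nat pmf \<Rightarrow> bool" where
  "heavy_binomial_form c0 eps N S \<longleftrightarrow>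
     (\<exists>u l q. u \<le> N \<and> l \<le> N \<and> 0 \<le> q \<and> q \<le> 1 \<and>
        tv_dist S (map_pmf (\<lambda>k. u + k) (binomial_pmf l q)) \<le> eps \<and>
        real l * q * (1 - q) \<ge> c0 / eps\<^sup>2)"

end

theory Submission
  imports Defs
begin


lemma measure_pmf_sum_F:
  fixes M :: "'a pmf"
  assumes "finite F" "set_pmf M \<subseteq> F"
  shows "measure_pmf.prob M X = (\<Sum>y\<in>F. pmf M y * indicator X y)"
proof -
  have "measure_pmf.prob M X = measure_pmf.prob M (X \<inter> F)"
    using assms(2) by (intro measure_prob_cong_0) (auto simp: set_pmf_eq)
  also have "\<dots> = sum (pmf M) (X \<inter> F)"
    using assms(1) by (simp add: measure_measure_pmf_finite)
  also have "\<dots> = (\<Sum>y\<in>F. pmf M y * indicator X y)"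
    using assms(1) by (simp add: sum.inter_restrict indicator_def Int_commute)
  finally show ?thesis .
qed

lemma bin_sum1:
  assumes "0 \<le> q" "q \<le> 1"
  shows "(\<Sum>k\<le>n. real (n choose k) * q^k * (1-q)^(n-k)) = 1"
  using binomial_ring[of q "1-q" n] by (simp add: atLeast0AtMost)

lemma bin_step:
  "real (Suc k) * (real (Suc n choose Suc k) * q^Suc k * r^(Suc n - Suc k)) =
   real (Suc n) * q * (real (n choose k) * q^k * r^(n-k))"
proof -
  have e: "real (Suc k) * real (Suc n choose Suc k) = real (Suc n) * real (n choose k)"
    using Suc_times_binomial_eq[of n k] by (metis mult.commute of_nat_mult)
  have "real (Suc k) * (real (Suc n choose Suc k) * q^Suc k * r^(Suc n - Suc k)) =
        (real (Suc k) * real (Suc n choose Suc k)) * q * (q^k * r^(n-k))"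
    by (simp only: power_Suc diff_Suc_Suc mult_ac)
  also have "\<dots> = (real (Suc n) * real (n choose k)) * q * (q^k * r^(n-k))"
    by (simp only: e)
  also have "\<dots> = real (Suc n) * q * (real (n choose k) * q^k * r^(n-k))"
    by (simp only: mult_ac)
  finally show ?thesis .
qed

lemma bin_E1:
  assumes "0 \<le> q" "q \<le> 1"
  shows "(\<Sum>k\<le>l. real k * (real (l choose k) * q^k * (1-q)^(l-k))) = real l * q"
proof (cases l)
  case 0 then show ?thesis by simp
next
  case (Suc n)
  have "(\<Sum>k\<le>Suc n. real k * (real (Suc n choose k) * q^k * (1-q)^(Suc n-k)))
      = (\<Sum>k\<le>n. real (Suc k) * (real (Suc n choose Suc k) * q^Suc k * (1-q)^(Suc n - Suc k)))"
    by (subst sum.atMost_Suc_shift) (simp del: of_nat_Suc diff_Suc_Suc power_Suc)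
  also have "\<dots> = (\<Sum>k\<le>n. real (Suc n) * q * (real (n choose k) * q^k * (1-q)^(n-k)))"
    by (simp only: bin_step)
  also have "\<dots> = real (Suc n) * q"
    by (simp only: sum_distrib_left[symmetric] bin_sum1[OF assms] mult_1_right)
  finally show ?thesis using Suc by simp
qed

lemma bin_E2:
  assumes "0 \<le> q" "q \<le> 1"
  shows "(\<Sum>k\<le>l. real k * (real k - 1) * (real (l choose k) * q^k * (1-q)^(l-k))) = real l * (real l - 1) * q^2"
proof (cases l)
  case 0 then show ?thesis by simp
next
  case (Suc n)
  have "(\<Sum>k\<le>Suc n. real k * (real k - 1) * (real (Suc n choose k) * q^k * (1-q)^(Suc n-k)))
      = (\<Sum>k\<le>n. real k * (real (Suc k) * (real (Suc n choose Suc k) * q^Suc k * (1-q)^(Suc n - Suc k))))"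
    by (subst sum.atMost_Suc_shift) (simp del: diff_Suc_Suc power_Suc add: mult_ac)
  also have "\<dots> = (\<Sum>k\<le>n. real (Suc n) * q * (real k * (real (n choose k) * q^k * (1-q)^(n-k))))"
    proof (intro sum.cong refl)
    fix k assume "k \<in> {..n}"
    have "real k * (real (Suc k) * (real (Suc n choose Suc k) * q^Suc k * (1-q)^(Suc n - Suc k)))
       = real k * (real (Suc n) * q * (real (n choose k) * q^k * (1-q)^(n-k)))"
      by (simp only: bin_step)
    also have "\<dots> = real (Suc n) * q * (real k * (real (n choose k) * q^k * (1-q)^(n-k)))"
      by (simp only: mult_ac)
    finally show "real k * (real (Suc k) * (real (Suc n choose Suc k) * q^Suc k * (1-q)^(Suc n - Suc k)))
       = real (Suc n) * q * (real k * (real (n choose k) * q^k * (1-q)^(n-k)))" .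
  qed
  also have "\<dots> = real (Suc n) * q * (real n * q)"
    by (simp only: sum_distrib_left[symmetric] bin_E1[OF assms])
  finally show ?thesis using Suc by (simp add: power2_eq_square algebra_simps)
qed

lemma bin_var:
  assumes "0 \<le> q" "q \<le> 1"
  shows "(\<Sum>k\<le>l. (real k - real l * q)^2 * (real (l choose k) * q^k * (1-q)^(l-k))) = real l * q * (1 - q)"
proof -
  define F where "F k = real (l choose k) * q^k * (1-q)^(l-k)" for k
  have eq: "(real k - real l * q)^2 * F k = real k * (real k - 1) * F k + (1 - 2 * real l * q) * (real k * F k)
          + (real l * q)^2 * F k" for k
    by (simp add: power2_eq_square algebra_simps)
  have "(\<Sum>k\<le>l. (real k - real l * q)^2 * F k) =
        (\<Sum>k\<le>l. real k * (real k - 1) * F k) + (1 - 2 * real l * q) * (\<Sum>k\<le>l. real k * F k)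
          + (real l * q)^2 * (\<Sum>k\<le>l. F k)"
    by (simp only: eq sum.distrib sum_distrib_left)
  also have "\<dots> = real l * (real l - 1) * q^2 + (1 - 2 * real l * q) * (real l * q) + (real l * q)^2"
    using bin_E1[OF assms, of l] bin_E2[OF assms, of l] bin_sum1[OF assms, of l]
    by (simp only: F_def mult_1_right)
  also have "\<dots> = real l * q * (1 - q)"
    by (simp add: power2_eq_square algebra_simps)
  finally show ?thesis by (simp add: F_def)
qed



lemma bin_ratio:
  assumes "0 \<le> q" "q \<le> 1" "k < l"
  shows "pmf (binomial_pmf l q) (Suc k) * (real (Suc k) * (1-q)) =
         pmf (binomial_pmf l q) k * (real (l - k) * q)"
proof -
  have c: "real (Suc k) * real (l choose Suc k) = real (l - k) * real (l choose k)"
    using binomial_absorption[of k l] binomial_absorb_comp[of l k] by (metis of_nat_mult)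
  have e: "l - k = Suc (l - Suc k)" using assms(3) by simp
  have "pmf (binomial_pmf l q) (Suc k) * (real (Suc k) * (1-q)) =
        (real (Suc k) * real (l choose Suc k)) * (q^k * q * ((1-q)^(l - Suc k) * (1-q)))"
    using assms by (simp add: mult_ac)
  also have "\<dots> = (real (l - k) * real (l choose k)) * (q^k * q * ((1-q)^(l - Suc k) * (1-q)))"
    by (simp only: c)
  also have "\<dots> = pmf (binomial_pmf l q) k * (real (l - k) * q)"
    using assms by (simp add: e mult_ac)
  finally show ?thesis .
qed

lemma bin_cheb:
  assumes "0 \<le> q" "q \<le> 1" "T > 0" "real l * q * (1-q) > 0"
  shows "measure_pmf.prob (binomial_pmf l q) {k. \<bar>real k - real l * q\<bar> > T * sqrt (real l * q * (1-q))}
          \<le> 1 / T^2"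
proof -
  define V where "V = real l * q * (1-q)"
  define F where "F k = real (l choose k) * q^k * (1-q)^(l-k)" for k
  have V: "V > 0" using assms by (simp add: V_def)
  have sq: "sqrt V ^ 2 = V" using V by simp
  have sp: "set_pmf (binomial_pmf l q) \<subseteq> {..l}"
    using assms by (auto simp: set_pmf_binomial_eq)
  have "measure_pmf.prob (binomial_pmf l q) {k. \<bar>real k - real l * q\<bar> > T * sqrt V}
      = (\<Sum>k\<le>l. F k * indicator {k. \<bar>real k - real l * q\<bar> > T * sqrt V} k)"
    using assms by (subst measure_pmf_sum_F[OF _ sp]) (simp_all add: F_def)
  also have "\<dots> \<le> (\<Sum>k\<le>l. (real k - real l * q)^2 * F k / (T^2 * V))"
  proof (intro sum_mono)
    fix k assume "k \<in> {..l}"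
    have F0: "F k \<ge> 0" using assms by (simp add: F_def)
    show "F k * indicator {k. \<bar>real k - real l * q\<bar> > T * sqrt V} k \<le> (real k - real l * q)^2 * F k / (T^2 * V)"
    proof (cases "\<bar>real k - real l * q\<bar> > T * sqrt V")
      case True
      have "T * sqrt V \<ge> 0" using assms V by simp
      hence "(T * sqrt V)^2 \<le> \<bar>real k - real l * q\<bar>^2"
        using True by (intro power_mono) auto
      hence "T^2 * V \<le> (real k - real l * q)^2" by (simp add: power_mult_distrib sq)
      hence "1 \<le> (real k - real l * q)^2 / (T^2 * V)" using assms V by simp
      hence "F k * 1 \<le> F k * ((real k - real l * q)^2 / (T^2 * V))"
        using F0 by (intro mult_left_mono) auto
      then show ?thesis using True by (simp add: mult.commute)
    next
      case False
      then show ?thesis using F0 assms V by simp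
    qed
  qed
  also have "\<dots> = (\<Sum>k\<le>l. (real k - real l * q)^2 * F k) / (T^2 * V)"
    by (simp add: sum_divide_distrib)
  also have "\<dots> = V / (T^2 * V)"
    using bin_var[OF assms(1,2), of l] by (simp add: F_def V_def)
  also have "\<dots> = 1 / T^2" using V by simp
  finally show ?thesis by (simp add: V_def)
qed



lemma bin_down:
  assumes q: "0 < q" "q < 1" and s: "s = sqrt (real l * q * (1-q))" "s \<ge> 3"
    and j: "real j \<ge> real l * q - s - 1"
  shows "(1 - 3/s) * pmf (binomial_pmf l q) (Suc j) \<le> pmf (binomial_pmf l q) j"
proof (cases "j < l")
  case False
  then have "pmf (binomial_pmf l q) (Suc j) = 0" using q by simp
  then show ?thesis by simp
next
  case True
  define L where "L = real l"
  define J where "J = real j"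
  have LJ: "real (l - j) = L - J" using True by (simp add: L_def J_def)
  have ss: "s * s = L * q * (1-q)" using s q by (simp add: L_def real_sqrt_mult_self) 
  have sp: "s > 0" using s(2) by simp
  have K: "(1 - 3/s) * ((L - J) * q) \<le> (J + 1) * (1 - q)"
  proof (cases "J \<ge> L * q")
    case True
    have A0: "(L - J) * q \<ge> 0" using \<open>j < l\<close> q by (simp add: L_def J_def)
    have "(1 - 3/s) * ((L - J) * q) \<le> 1 * ((L - J) * q)"
      using A0 sp by (intro mult_right_mono) auto
    also have "\<dots> \<le> (J + 1) * (1 - q)" using True q by (simp add: algebra_simps)
    finally show ?thesis .
  next
    case False
    have "(L * q - J) * q \<ge> 0" using False q by simp
    hence A1: "(L - J) * q \<ge> s * s" using ss by (simp add: algebra_simps)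
    have "3 * ((L - J) * q) / s \<ge> 3 * (s * s) / s" using A1 sp by (intro divide_right_mono) auto
    hence A2: "3 * ((L - J) * q) / s \<ge> 3 * s" using sp by simp
    have A3: "(1 - 3/s) * ((L - J) * q) = (L - J) * q - 3 * ((L - J) * q) / s"
      by (simp add: left_diff_distrib)
    have A4: "(J + 1) * (1 - q) - (L - J) * q = J + 1 - q - L * q" by (simp add: algebra_simps)
    have "J \<ge> L * q - s - 1" using j by (simp add: L_def J_def)
    then show ?thesis using A2 A3 A4 q s(2) by (smt (verit))
  qed
  have r: "pmf (binomial_pmf l q) (Suc j) * ((J + 1) * (1-q)) = pmf (binomial_pmf l q) j * ((L - J) * q)"
    using bin_ratio[of q j l] True q LJ by (simp add: J_def L_def add.commute)
  have pos: "(J + 1) * (1 - q) > 0" using q by (simp add: J_def)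
  have "((1 - 3/s) * pmf (binomial_pmf l q) (Suc j)) * ((J + 1) * (1-q))
        = (1 - 3/s) * ((L - J) * q) * pmf (binomial_pmf l q) j"
    using r by (simp add: mult_ac)
  also have "\<dots> \<le> ((J + 1) * (1 - q)) * pmf (binomial_pmf l q) j"
    using K by (intro mult_right_mono) auto
  also have "\<dots> = pmf (binomial_pmf l q) j * ((J + 1) * (1-q))" by simp
  finally show ?thesis using pos by (simp add: mult_le_cancel_right)
qed

lemma bin_up:
  assumes q: "0 < q" "q < 1" and s: "s = sqrt (real l * q * (1-q))" "s \<ge> 3"
    and j: "real j \<le> real l * q + s"
  shows "(1 - 3/s) * pmf (binomial_pmf l q) j \<le> pmf (binomial_pmf l q) (Suc j)"
proof -
  define L where "L = real l"
  define J where "J = real j"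
  have ss: "s * s = L * q * (1-q)" using s q by (simp add: L_def real_sqrt_mult_self) 
  have sp: "s > 0" using s(2) by simp
  have "L * (1 - q) * q \<le> L * (1 - q)" using q by (intro mult_right_le_one_le) (auto simp: L_def)
  hence "L * (1 - q) \<ge> L * q * (1 - q)" by (simp add: mult_ac)
  hence "L - L * q \<ge> s * s" using ss by (simp add: algebra_simps)
  moreover have "s * s \<ge> 3 * s" using s(2) sp by (intro mult_right_mono) auto
  hence "s * s > s" using sp by linarith
  ultimately have "J < L" using j by (simp add: L_def J_def)
  hence jl: "j < l" by (simp add: L_def J_def)
  have LJ: "real (l - j) = L - J" using jl by (simp add: L_def J_def)
  have K: "(1 - 3/s) * ((J + 1) * (1 - q)) \<le> (L - J) * q"
  proof (cases "J + 1 \<le> L * q + q")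
    case True
    have B0: "(J + 1) * (1 - q) \<ge> 0" using q by (simp add: J_def)
    have "(1 - 3/s) * ((J + 1) * (1 - q)) \<le> 1 * ((J + 1) * (1 - q))"
      using B0 sp by (intro mult_right_mono) auto
    also have "\<dots> \<le> (L - J) * q" using True q by (simp add: algebra_simps)
    finally show ?thesis .
  next
    case False
    have "(J + 1 - L * q) * (1 - q) \<ge> 0" using False q by simp
    hence A1: "(J + 1) * (1 - q) \<ge> s * s" using ss by (simp add: algebra_simps)
    have "3 * ((J + 1) * (1 - q)) / s \<ge> 3 * (s * s) / s" using A1 sp by (intro divide_right_mono) auto
    hence A2: "3 * ((J + 1) * (1 - q)) / s \<ge> 3 * s" using sp by simp
    have A3: "(1 - 3/s) * ((J + 1) * (1 - q)) = (J + 1) * (1 - q) - 3 * ((J + 1) * (1 - q)) / s"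
      by (simp add: left_diff_distrib)
    have A4: "(L - J) * q - (J + 1) * (1 - q) = L * q - J - 1 + q" by (simp add: algebra_simps)
    have "J \<le> L * q + s" using j by (simp add: L_def J_def)
    then show ?thesis using A2 A3 A4 q s(2) by (smt (verit))
  qed
  have r: "pmf (binomial_pmf l q) (Suc j) * ((J + 1) * (1-q)) = pmf (binomial_pmf l q) j * ((L - J) * q)"
    using bin_ratio[of q j l] jl q LJ by (simp add: J_def L_def add.commute)
  have pos: "(J + 1) * (1 - q) > 0" using q by (simp add: J_def)
  have "((1 - 3/s) * pmf (binomial_pmf l q) j) * ((J + 1) * (1-q))
        = (1 - 3/s) * ((J + 1) * (1 - q)) * pmf (binomial_pmf l q) j"
    by (simp add: mult_ac)
  also have "\<dots> \<le> ((L - J) * q) * pmf (binomial_pmf l q) j"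
    using K by (intro mult_right_mono) auto
  also have "\<dots> = pmf (binomial_pmf l q) (Suc j) * ((J + 1) * (1-q))" using r by simp
  finally show ?thesis using pos by (simp add: mult_le_cancel_right)
qed



lemma max_finish:
  fixes g :: "nat \<Rightarrow> real"
  assumes "\<And>i. i \<le> n \<Longrightarrow> th^i * x \<le> g i" "(\<Sum>i\<le>n. g i) \<le> 1"
    "\<And>i. i \<le> n \<Longrightarrow> th^i \<ge> 1/2" "x \<ge> 0"
  shows "x \<le> 2 / (real n + 1)"
proof -
  have "(\<Sum>i\<le>n. x / 2) \<le> (\<Sum>i\<le>n. g i)"
  proof (intro sum_mono)
    fix i assume "i \<in> {..n}"
    hence "x / 2 \<le> th^i * x" using assms(3)[of i] assms(4) by (simp add: mult_right_mono[of "1/2" "th^i" x, simplified])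
    also have "\<dots> \<le> g i" using assms(1) \<open>i \<in> {..n}\<close> by simp
    finally show "x / 2 \<le> g i" .
  qed
  moreover have "(\<Sum>i\<le>n. x / 2) = (real n + 1) * x / 2" by (simp add: algebra_simps)
  ultimately have "(real n + 1) * x / 2 \<le> 1" using assms(2) by linarith
  thus ?thesis by (simp add: field_simps)
qed

lemma bin_max:
  assumes q: "0 < q" "q < 1" and s: "s = sqrt (real l * q * (1-q))" "s \<ge> 6"
  shows "pmf (binomial_pmf l q) k \<le> 12 / s"
proof -
  define f where "f = pmf (binomial_pmf l q)"
  define th where "th = 1 - 3/s"
  define n where "n = nat \<lfloor>s/6\<rfloor>"
  have sp: "s > 0" using s(2) by simp
  have n1: "real n \<le> s/6" using s(2) of_int_floor_le[of "s/6"] by (simp add: n_def)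
  have n2: "s/6 < real n + 1" using s(2) by (simp add: n_def)
  have ss: "s * s = real l * q * (1-q)" using s q by (simp add: real_sqrt_mult_self)
  have "real l * q * (1-q) \<le> real l * q" using q by (intro mult_right_le_one_le) auto
  hence lq: "real l * q \<ge> s * s" using ss by simp
  have s6: "s * s \<ge> 6 * s" using s(2) sp by (intro mult_right_mono) auto
  have th0: "th \<ge> 0" using s(2) sp by (simp add: th_def field_simps)
  have thb: "th^i \<ge> 1/2" if "i \<le> n" for i
  proof -
    have "1 + real i * (-3/s) \<le> (1 + (-3/s))^i"
      by (rule Bernoulli_inequality) (use s(2) sp in \<open>simp add: field_simps\<close>)
    moreover have "real i \<le> s / 6" using that n1 by linarith
    hence "real i * (3/s) \<le> (s/6) * (3/s)" using sp by (intro mult_right_mono) auto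
    hence "real i * (3/s) \<le> 1/2" using sp by simp
    ultimately show ?thesis by (simp add: th_def)
  qed
  have f0: "f k \<ge> 0" by (simp add: f_def)
  have "f k \<le> 2 / (real n + 1)"
  proof (cases "real k \<ge> real l * q")
    case True
    have kn: "real k \<ge> real n" using True lq s6 n1 sp by linarith
    have step: "th^i * f k \<le> f (k - i)" if "i \<le> n" for i
      using that
    proof (induction i)
      case 0 then show ?case by simp
    next
      case (Suc i)
      have "real (Suc i) \<le> real k" using Suc.prems kn by linarith
      hence ki: "Suc i \<le> k" by linarith
      have "th^Suc i * f k = th * (th^i * f k)" by simp
      also have "\<dots> \<le> th * f (k - i)" using Suc th0 by (intro mult_left_mono) auto
      also have "k - i = Suc (k - Suc i)" using ki by simp
      also have "th * f (Suc (k - Suc i)) \<le> f (k - Suc i)"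
        unfolding th_def f_def
      proof (rule bin_down[OF q s(1)])
        show "3 \<le> s" using s(2) by simp
        have "real (k - Suc i) = real k - real i - 1" using ki by (simp add: of_nat_diff)
        then show "real l * q - s - 1 \<le> real (k - Suc i)"
          using True Suc.prems n1 sp by simp
      qed
      finally show ?case .
    qed
    have inj: "inj_on (\<lambda>i. k - i) {..n}" using kn by (intro inj_onI) auto
    have "(\<Sum>i\<le>n. f (k - i)) = sum f ((\<lambda>i. k - i) ` {..n})"
      using inj by (simp add: sum.reindex)
    also have "\<dots> = measure_pmf.prob (binomial_pmf l q) ((\<lambda>i. k - i) ` {..n})"
      by (simp add: f_def measure_measure_pmf_finite)
    also have "\<dots> \<le> 1" by simp
    finally show ?thesis using max_finish[of n th "f k" "\<lambda>i. f (k - i)"] step thb f0 by simp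
  next
    case False
    have step: "th^i * f k \<le> f (k + i)" if "i \<le> n" for i
      using that
    proof (induction i)
      case 0 then show ?case by simp
    next
      case (Suc i)
      have "th^Suc i * f k = th * (th^i * f k)" by simp
      also have "\<dots> \<le> th * f (k + i)" using Suc th0 by (intro mult_left_mono) auto
      also have "th * f (k + i) \<le> f (Suc (k + i))"
        unfolding th_def f_def
      proof (rule bin_up[OF q s(1)])
        show "3 \<le> s" using s(2) by simp
        show "real (k + i) \<le> real l * q + s"
          using False Suc.prems n1 sp by simp
      qed
      finally show ?case by simp
    qed
    have inj: "inj_on (\<lambda>i. k + i) {..n}" by (intro inj_onI) auto
    have "(\<Sum>i\<le>n. f (k + i)) = sum f ((\<lambda>i. k + i) ` {..n})"
      using inj by (simp add: sum.reindex)
    also have "\<dots> = measure_pmf.prob (binomial_pmf l q) ((\<lambda>i. k + i) ` {..n})"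
      by (simp add: f_def measure_measure_pmf_finite)
    also have "\<dots> \<le> 1" by simp
    finally show ?thesis using max_finish[of n th "f k" "\<lambda>i. f (k + i)"] step thb f0 by simp
  qed
  also have "2 / (real n + 1) \<le> 12 / s"
    using n2 sp by (simp add: field_simps)
  finally show ?thesis by (simp add: f_def)
qed



lemma bin_inc:
  assumes q: "0 < q" "q < 1" and k: "real k \<le> (real l + 1) * q - 1"
  shows "pmf (binomial_pmf l q) k \<le> pmf (binomial_pmf l q) (Suc k)"
proof -
  have a: "real l * q \<le> real l" using q by (intro mult_right_le_one_le) auto
  have "(real l + 1) * q - 1 = real l * q + q - 1" by (simp add: algebra_simps)
  hence "(real l + 1) * q - 1 < real l" using a q by linarith
  hence kl: "k < l" using k by linarith
  have r: "pmf (binomial_pmf l q) (Suc k) * (real (Suc k) * (1-q)) =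
         pmf (binomial_pmf l q) k * (real (l - k) * q)" using bin_ratio[of q k l] q kl by simp
  have "real (Suc k) * (1-q) \<le> real (l - k) * q"
    using kl k by (simp add: of_nat_diff algebra_simps)
  hence "pmf (binomial_pmf l q) k * (real (Suc k) * (1-q)) \<le> pmf (binomial_pmf l q) k * (real (l - k) * q)"
    by (intro mult_left_mono) auto
  also have "\<dots> = pmf (binomial_pmf l q) (Suc k) * (real (Suc k) * (1-q))" using r by simp
  finally show ?thesis using q by (simp add: mult_le_cancel_right)
qed

lemma bin_dec:
  assumes q: "0 < q" "q < 1" and k: "real k > (real l + 1) * q - 1"
  shows "pmf (binomial_pmf l q) (Suc k) \<le> pmf (binomial_pmf l q) k"
proof (cases "k < l")
  case False
  hence "l choose Suc k = 0" by (simp add: binomial_eq_0)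
  hence "pmf (binomial_pmf l q) (Suc k) = 0" using q by simp
  then show ?thesis by simp
next
  case kl: True
  have r: "pmf (binomial_pmf l q) (Suc k) * (real (Suc k) * (1-q)) =
         pmf (binomial_pmf l q) k * (real (l - k) * q)" using bin_ratio[of q k l] q kl by simp
  have "real (l - k) * q \<le> real (Suc k) * (1-q)"
    using kl k by (simp add: of_nat_diff algebra_simps)
  hence "pmf (binomial_pmf l q) k * (real (l - k) * q) \<le> pmf (binomial_pmf l q) k * (real (Suc k) * (1-q))"
    by (intro mult_left_mono) auto
  hence "pmf (binomial_pmf l q) (Suc k) * (real (Suc k) * (1-q)) \<le> pmf (binomial_pmf l q) k * (real (Suc k) * (1-q))"
    using r by simp
  then show ?thesis using q by (simp add: mult_le_cancel_right)
qed

lemma tv_unimodal: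
  fixes g :: "nat \<Rightarrow> real"
  assumes "\<And>k. g k \<ge> 0" "\<And>k. g k \<le> M" "\<And>k. k < K \<Longrightarrow> g k \<le> g (Suc k)"
    "\<And>k. k \<ge> K \<Longrightarrow> g (Suc k) \<le> g k"
  shows "(\<Sum>k<L. \<bar>g (Suc k) - g k\<bar>) \<le> 2 * M"
proof (cases "L \<le> K")
  case True
  have "(\<Sum>k<L. \<bar>g (Suc k) - g k\<bar>) = (\<Sum>k<L. g (Suc k) - g k)"
    using True assms(3) by (intro sum.cong) auto
  also have "\<dots> = g L - g 0" by (rule sum_lessThan_telescope)
  finally show ?thesis using assms(1)[of 0] assms(2)[of L] assms(1)[of L] assms(2)[of 0] by linarith
next
  case False
  have split: "{..<L} = {..<K} \<union> {K..<L}" using False by auto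
  have "(\<Sum>k<L. \<bar>g (Suc k) - g k\<bar>) = (\<Sum>k<K. \<bar>g (Suc k) - g k\<bar>) + (\<Sum>k\<in>{K..<L}. \<bar>g (Suc k) - g k\<bar>)"
    by (subst split, rule sum.union_disjoint) auto
  also have "(\<Sum>k<K. \<bar>g (Suc k) - g k\<bar>) = (\<Sum>k<K. g (Suc k) - g k)"
    using assms(3) by (intro sum.cong) auto
  also have "\<dots> = g K - g 0" by (rule sum_lessThan_telescope)
  also have "(\<Sum>k\<in>{K..<L}. \<bar>g (Suc k) - g k\<bar>) = - (\<Sum>k\<in>{K..<L}. g (Suc k) - g k)"
    using assms(4) by (simp add: sum_negf[symmetric])
  also have "(\<Sum>k\<in>{K..<L}. g (Suc k) - g k) = g L - g K" using False by (intro sum_Suc_diff') auto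
  finally show ?thesis using assms(1)[of 0] assms(2)[of K] assms(1)[of L] by linarith
qed

lemma bin_tv:
  assumes q: "0 < q" "q < 1" and s: "s = sqrt (real l * q * (1-q))" "s \<ge> 6"
  shows "(\<Sum>k<L. \<bar>pmf (binomial_pmf l q) (Suc k) - pmf (binomial_pmf l q) k\<bar>) \<le> 24 / s"
proof -
  define K where "K = nat (\<lfloor>(real l + 1) * q - 1\<rfloor> + 1)"
  have Kc: "k < K \<longleftrightarrow> real k \<le> (real l + 1) * q - 1" for k
  proof -
    have "k < K \<longleftrightarrow> int k < \<lfloor>(real l + 1) * q - 1\<rfloor> + 1" by (simp only: K_def zless_nat_eq_int_zless)
    also have "\<dots> \<longleftrightarrow> int k \<le> \<lfloor>(real l + 1) * q - 1\<rfloor>" by linarith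
    also have "\<dots> \<longleftrightarrow> real k \<le> (real l + 1) * q - 1" by (simp only: le_floor_iff of_int_of_nat_eq)
    finally show ?thesis .
  qed
  have "(\<Sum>k<L. \<bar>pmf (binomial_pmf l q) (Suc k) - pmf (binomial_pmf l q) k\<bar>) \<le> 2 * (12 / s)"
  proof (rule tv_unimodal[where K = K])
    fix k
    show "pmf (binomial_pmf l q) k \<le> 12 / s" using bin_max[OF q s] .
    show "k < K \<Longrightarrow> pmf (binomial_pmf l q) k \<le> pmf (binomial_pmf l q) (Suc k)"
      using bin_inc[OF q] Kc by blast
    show "k \<ge> K \<Longrightarrow> pmf (binomial_pmf l q) (Suc k) \<le> pmf (binomial_pmf l q) k"
      using bin_dec[OF q] Kc by (meson not_le not_less)
  qed simp
  then show ?thesis by simp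
qed



lemma bin_set: "0 \<le> q \<Longrightarrow> q \<le> 1 \<Longrightarrow> set_pmf (binomial_pmf l q) \<subseteq> {..<Suc l}"
  by (auto simp: set_pmf_binomial_eq)

lemma bin_shift:
  assumes q: "0 < q" "q < 1" and s: "s = sqrt (real l * q * (1-q))" "s \<ge> 6"
  shows "measure_pmf.prob (binomial_pmf l q) A \<le>
         measure_pmf.prob (binomial_pmf l q) {k. 1 \<le> k \<and> k - 1 \<in> A} + 24 / s"
proof -
  define f where "f = pmf (binomial_pmf l q)"
  define A' where "A' = {k. 1 \<le> k \<and> k - 1 \<in> A}"
  have s1: "set_pmf (binomial_pmf l q) \<subseteq> {..<Suc l}" using bin_set q by auto
  have s2: "set_pmf (binomial_pmf l q) \<subseteq> {..<Suc (Suc l)}" using s1 by auto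
  have m1: "measure_pmf.prob (binomial_pmf l q) A = (\<Sum>k<Suc l. f k * indicator A k)"
    by (subst measure_pmf_sum_F[OF _ s1]) (simp_all add: f_def)
  have "measure_pmf.prob (binomial_pmf l q) A' = (\<Sum>k<Suc (Suc l). f k * indicator A' k)"
    by (subst measure_pmf_sum_F[OF _ s2]) (simp_all add: f_def)
  also have "\<dots> = f 0 * indicator A' 0 + (\<Sum>k<Suc l. f (Suc k) * indicator A' (Suc k))"
    by (subst sum.lessThan_Suc_shift) simp
  also have "\<dots> = (\<Sum>k<Suc l. f (Suc k) * indicator A k)"
    by (simp add: A'_def indicator_def)
  finally have m2: "measure_pmf.prob (binomial_pmf l q) A' = (\<Sum>k<Suc l. f (Suc k) * indicator A k)" .
  have "(\<Sum>k<Suc l. f k * indicator A k) - (\<Sum>k<Suc l. f (Suc k) * indicator A k)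
        = (\<Sum>k<Suc l. (f k - f (Suc k)) * indicator A k)"
    by (simp only: sum_subtractf[symmetric] left_diff_distrib)
  also have "\<dots> \<le> (\<Sum>k<Suc l. \<bar>f (Suc k) - f k\<bar>)"
    by (intro sum_mono) (auto simp: indicator_def)
  also have "\<dots> \<le> 24 / s" unfolding f_def by (rule bin_tv[OF q s])
  finally show ?thesis using m1 m2 by (simp add: A'_def)
qed

lemma bin_residue:
  assumes q: "0 < q" "q < 1" and s: "s = sqrt (real l * q * (1-q))" "s \<ge> 6" and d: "d \<ge> 1"
  shows "measure_pmf.prob (binomial_pmf l q) {k. int d dvd int k - c} \<le> 1 / real d + 24 * real d / s"
proof -
  define P where "P c = measure_pmf.prob (binomial_pmf l q) {k. int d dvd int k - c}" for c
  have step: "P c \<le> P (c + 1) + 24 / s" for c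
  proof -
    have "P c \<le> measure_pmf.prob (binomial_pmf l q) {k. 1 \<le> k \<and> k - 1 \<in> {k. int d dvd int k - c}} + 24 / s"
      unfolding P_def by (rule bin_shift[OF q s])
    also have "measure_pmf.prob (binomial_pmf l q) {k. 1 \<le> k \<and> k - 1 \<in> {k. int d dvd int k - c}}
        \<le> P (c + 1)"
      unfolding P_def
    proof (intro measure_pmf.finite_measure_mono subsetI)
      fix k assume "k \<in> {k. 1 \<le> k \<and> k - 1 \<in> {k. int d dvd int k - c}}"
      hence "1 \<le> k" "int d dvd int (k - 1) - c" by auto
      moreover have "int (k - 1) - c = int k - (c + 1)" using \<open>1 \<le> k\<close> by (simp add: of_nat_diff)
      ultimately have "int d dvd int k - (c + 1)" by (metis diff_diff_eq add.commute)
      thus "k \<in> {k. int d dvd int k - (c + 1)}" by simp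
    qed simp
    finally show ?thesis by simp
  qed
  have iter: "P c \<le> P (c + int j) + 24 * real j / s" for j
  proof (induction j)
    case 0 then show ?case by simp
  next
    case (Suc j)
    have "P (c + int j) \<le> P (c + int j + 1) + 24 / s" by (rule step)
    then show ?case using Suc by (simp add: add_divide_distrib algebra_simps)
  qed
  have disj: "disjoint_family_on (\<lambda>j. {k. int d dvd int k - (c + int j)}) {..<d}"
  proof (unfold disjoint_family_on_def, intro ballI impI)
    fix i j assume ij: "i \<in> {..<d}" "j \<in> {..<d}" "i \<noteq> j"
    show "{k. int d dvd int k - (c + int i)} \<inter> {k. int d dvd int k - (c + int j)} = {}"
    proof (rule ccontr)
      assume "\<not> ?thesis"
      then obtain k where k: "int d dvd int k - (c + int i)" "int d dvd int k - (c + int j)" by auto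
      have "int d dvd (int k - (c + int j)) - (int k - (c + int i))" using k by (rule dvd_diff[rotated])
      hence dv: "int d dvd int i - int j" by simp
      show False
      proof (cases "i < j")
        case True
        hence "int d dvd int j - int i" using dv by (metis dvd_minus_iff minus_diff_eq)
        hence "int d \<le> int j - int i" using True by (intro zdvd_imp_le) auto
        then show False using ij by auto
      next
        case False
        hence "j < i" using ij by auto
        hence "int d \<le> int i - int j" using dv by (intro zdvd_imp_le) auto
        then show False using ij by auto
      qed
    qed
  qed
  have "(\<Sum>j<d. P (c + int j)) = measure_pmf.prob (binomial_pmf l q) (\<Union>j<d. {k. int d dvd int k - (c + int j)})"
    unfolding P_def by (rule measure_pmf.finite_measure_finite_Union[symmetric]) (use disj in auto)
  also have "\<dots> \<le> 1" by simp
  finally have sum1: "(\<Sum>j<d. P (c + int j)) \<le> 1" .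
  have "real d * P c = (\<Sum>j<d. P c)" by simp
  also have "\<dots> \<le> (\<Sum>j<d. P (c + int j) + 24 * real d / s)"
  proof (intro sum_mono)
    fix j assume "j \<in> {..<d}"
    have "24 * real j / s \<le> 24 * real d / s" using \<open>j \<in> {..<d}\<close> s(2) by (intro divide_right_mono) auto
    then show "P c \<le> P (c + int j) + 24 * real d / s" using iter[of j] by linarith
  qed
  also have "\<dots> = (\<Sum>j<d. P (c + int j)) + real d * (24 * real d / s)" by (simp add: sum.distrib)
  also have "\<dots> \<le> 1 + real d * (24 * real d / s)" using sum1 by simp
  finally have "real d * P c \<le> 1 + real d * (24 * real d / s)" .
  hence "P c \<le> (1 + real d * (24 * real d / s)) / real d" using d by (simp add: field_simps)
  also have "\<dots> = 1 / real d + 24 * real d / s" using d by (simp add: field_simps)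
  finally show ?thesis by (simp add: P_def)
qed

lemma card_window:
  fixes mu R :: real and c :: int
  assumes d: "d \<ge> 1" and R: "R \<ge> 0"
  shows "finite {k::nat. \<bar>real k - mu\<bar> \<le> R \<and> int d dvd int k - c}"
    "real (card {k::nat. \<bar>real k - mu\<bar> \<le> R \<and> int d dvd int k - c}) \<le> 2 * R / real d + 1"
proof -
  define G where "G = {k::nat. \<bar>real k - mu\<bar> \<le> R \<and> int d dvd int k - c}"
  define lo where "lo = (mu - R - real_of_int c) / real d"
  define hi where "hi = (mu + R - real_of_int c) / real d"
  define phi where "phi k = (int k - c) div int d" for k
  have dpos: "real d > 0" using d by simp
  have G_sub: "G \<subseteq> {..nat \<lceil>mu + R\<rceil>}"
  proof
    fix k assume "k \<in> G"
    hence "real k \<le> mu + R" by (auto simp: G_def)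
    hence "real k \<le> real_of_int \<lceil>mu + R\<rceil>" by (meson le_of_int_ceiling order_trans)
    hence "int k \<le> \<lceil>mu + R\<rceil>" by linarith
    thus "k \<in> {..nat \<lceil>mu + R\<rceil>}" by simp
  qed
  show fin: "finite G" unfolding G_def[symmetric] by (rule finite_subset[OF G_sub]) simp
  have inj: "inj_on phi G"
  proof (intro inj_onI)
    fix x y assume xy: "x \<in> G" "y \<in> G" "phi x = phi y"
    have "int x - c = int d * phi x" using xy(1) unfolding G_def phi_def
      by (simp add: dvd_mult_div_cancel)
    moreover have "int y - c = int d * phi y" using xy(2) unfolding G_def phi_def
      by (simp add: dvd_mult_div_cancel)
    ultimately show "x = y" using xy(3) by simp
  qed
  have img: "phi ` G \<subseteq> {\<lceil>lo\<rceil>..\<lfloor>hi\<rfloor>}"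
  proof
    fix t assume "t \<in> phi ` G"
    then obtain k where k: "k \<in> G" "t = phi k" by auto
    hence e: "int k - c = int d * t" by (simp add: G_def phi_def dvd_mult_div_cancel)
    hence e': "real k - real_of_int c = real d * real_of_int t"
      by (metis of_int_mult of_int_of_nat_eq of_int_diff)
    have b: "\<bar>real k - mu\<bar> \<le> R" using k by (auto simp: G_def)
    have "real d * lo \<le> real d * real_of_int t" using b e' dpos by (simp add: lo_def)
    hence "lo \<le> real_of_int t" using dpos by simp
    moreover have "real d * real_of_int t \<le> real d * hi" using b e' dpos by (simp add: hi_def)
    hence "real_of_int t \<le> hi" using dpos by simp
    ultimately show "t \<in> {\<lceil>lo\<rceil>..\<lfloor>hi\<rfloor>}" by (simp add: ceiling_le_iff le_floor_iff)
  qed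
  have "card G = card (phi ` G)" using inj by (simp add: card_image)
  also have "\<dots> \<le> card {\<lceil>lo\<rceil>..\<lfloor>hi\<rfloor>}" by (intro card_mono img) simp
  also have "\<dots> = nat (\<lfloor>hi\<rfloor> - \<lceil>lo\<rceil> + 1)" by simp
  finally have "real (card G) \<le> real (nat (\<lfloor>hi\<rfloor> - \<lceil>lo\<rceil> + 1))" by linarith
  also have "\<dots> \<le> max 0 (hi - lo + 1)"
    using of_int_floor_le[of hi] le_of_int_ceiling[of lo] by (simp add: max_def) linarith
  also have "hi - lo + 1 = 2 * R / real d + 1" using dpos by (simp add: hi_def lo_def field_simps)
  also have "max 0 (2 * R / real d + 1) = 2 * R / real d + 1" using R dpos by simp
  finally show "real (card {k::nat. \<bar>real k - mu\<bar> \<le> R \<and> int d dvd int k - c}) \<le> 2 * R / real d + 1"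
    by (simp add: G_def)
qed



lemma inv_sq_sum:
  assumes "a \<ge> 1"
  shows "(\<Sum>d\<in>{Suc a..b}. 1 / (real d)^2) \<le> 1 / real a"
proof (cases "b \<ge> a")
  case False
  then have "{Suc a..b} = {}" by auto
  then show ?thesis by simp
next
  case True
  have "(\<Sum>d\<in>{Suc a..b}. 1 / (real d)^2) \<le> 1 / real a - 1 / real b"
    using True
  proof (induction b rule: nat_induct_at_least)
    case base then show ?case by simp
  next
    case (Suc n)
    have n1: "real n \<ge> 1" using Suc.hyps assms by simp
    have "(\<Sum>d\<in>{Suc a..Suc n}. 1 / (real d)^2) = (\<Sum>d\<in>{Suc a..n}. 1 / (real d)^2) + 1 / (real (Suc n))^2"
      using Suc.hyps by (subst atLeastAtMostSuc_conv) auto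
    also have "\<dots> \<le> 1 / real a - 1 / real n + 1 / (real (Suc n))^2" using Suc.IH by simp
    also have "1 / (real (Suc n))^2 \<le> 1 / real n - 1 / real (Suc n)"
    proof -
      have e: "1 / real n - 1 / real (Suc n) = 1 / (real n * real (Suc n))"
        using n1 by (simp add: field_simps)
      have "real n * real (Suc n) \<le> real (Suc n) * real (Suc n)" by (intro mult_right_mono) auto
      hence "1 / (real (Suc n) * real (Suc n)) \<le> 1 / (real n * real (Suc n))"
        using n1 by (intro divide_left_mono) auto
      thus ?thesis using e by (simp add: power2_eq_square)
    qed
    finally show ?case by simp
  qed
  also have "\<dots> \<le> 1 / real a" using True assms by simp
  finally show ?thesis .
qed

lemma bin_diag:
  assumes q: "0 < q" "q < 1" and s: "s = sqrt (real l * q * (1-q))" "s \<ge> 6"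
  shows "measure_pmf.prob (pair_pmf (binomial_pmf l q) (binomial_pmf l q)) {p. fst p = snd p} \<le> 12 / s"
proof -
  define f where "f = pmf (binomial_pmf l q)"
  define F where "F = {..<Suc l}"
  have sF: "set_pmf (binomial_pmf l q) \<subseteq> F" using bin_set q by (auto simp: F_def)
  have sP: "set_pmf (pair_pmf (binomial_pmf l q) (binomial_pmf l q)) \<subseteq> F \<times> F" using sF by auto
  have "measure_pmf.prob (pair_pmf (binomial_pmf l q) (binomial_pmf l q)) {p. fst p = snd p}
      = (\<Sum>p\<in>F \<times> F. pmf (pair_pmf (binomial_pmf l q) (binomial_pmf l q)) p * indicator {p. fst p = snd p} p)"
    by (rule measure_pmf_sum_F[OF _ sP]) (simp add: F_def)
  also have "\<dots> = (\<Sum>p\<in>F \<times> F. f (fst p) * (f (snd p) * indicator {p. fst p = snd p} p))"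
    by (intro sum.cong refl) (auto simp: pmf_pair f_def)
  also have "\<dots> = (\<Sum>x\<in>F. \<Sum>y\<in>F. f x * (f y * indicator {p. fst p = snd p} (x, y)))"
    by (subst sum.cartesian_product) (simp add: case_prod_unfold)
  also have "\<dots> = (\<Sum>x\<in>F. f x * f x)"
    by (intro sum.cong refl) (simp add: sum_distrib_left[symmetric] indicator_def F_def)
  also have "\<dots> \<le> (\<Sum>x\<in>F. f x * (12 / s))"
    by (intro sum_mono mult_left_mono) (auto simp: f_def bin_max[OF q s])
  also have "\<dots> = (12 / s) * sum f F"
    by (simp only: sum_distrib_right[symmetric] mult.commute)
  also have "\<dots> = (12 / s) * measure_pmf.prob (binomial_pmf l q) F"
    by (simp only: measure_measure_pmf_finite[OF finite_lessThan[of "Suc l"]] F_def f_def)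
  also have "\<dots> \<le> (12 / s) * 1" using s(2) by (intro mult_left_mono) auto
  finally show ?thesis by simp
qed

lemma bin_small_d:
  assumes q: "0 < q" "q < 1" and s: "s = sqrt (real l * q * (1-q))" "s \<ge> 6"
    and d: "2 \<le> d" "d \<le> P0" and sP: "24 * real P0 \<le> s" and G: "G \<subseteq> {k. int d dvd int k - c}"
  shows "measure_pmf.prob (binomial_pmf l q) G ^ 2 \<le> 1 / (real d)^2 + 72 * real P0 / s"
proof -
  define e where "e = 24 * real d / s"
  have sp: "s > 0" using s(2) by simp
  have e0: "e \<ge> 0" using sp by (simp add: e_def)
  have e1: "e \<le> 24 * real P0 / s" using d sp by (simp add: e_def divide_right_mono)
  have "24 * real P0 / s \<le> 1" using sP sp by simp
  hence e2: "e \<le> 1" using e1 by linarith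
  have m0: "measure_pmf.prob (binomial_pmf l q) G \<ge> 0" by simp
  have "measure_pmf.prob (binomial_pmf l q) G \<le> measure_pmf.prob (binomial_pmf l q) {k. int d dvd int k - c}"
    using G by (intro measure_pmf.finite_measure_mono) auto
  also have "\<dots> \<le> 1 / real d + e" unfolding e_def using d by (intro bin_residue[OF q s]) auto
  finally have m1: "measure_pmf.prob (binomial_pmf l q) G \<le> 1 / real d + e" .
  have "measure_pmf.prob (binomial_pmf l q) G ^ 2 \<le> (1 / real d + e)^2"
    using m0 m1 by (intro power_mono) auto
  also have "\<dots> = 1 / (real d)^2 + 2 * e * (1 / real d) + e * e" by (simp add: power2_eq_square algebra_simps)
  also have "2 * e * (1 / real d) \<le> 2 * e * 1" using d e0 by (intro mult_left_mono) auto
  also have "e * e \<le> e * 1" using e0 e2 by (intro mult_left_mono) auto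
  finally have "measure_pmf.prob (binomial_pmf l q) G ^ 2 \<le> 1 / (real d)^2 + 3 * e" by simp
  also have "3 * e \<le> 3 * (24 * real P0 / s)" using e1 by simp
  finally show ?thesis by simp
qed

lemma bin_large_d:
  assumes q: "0 < q" "q < 1" and s: "s = sqrt (real l * q * (1-q))" "s \<ge> 6"
    and d: "1 \<le> d"
  shows "measure_pmf.prob (binomial_pmf l q) {k. \<bar>real k - mu\<bar> \<le> 4 * s \<and> int d dvd int k - c} ^ 2
         \<le> 18432 / (real d)^2 + 288 / s^2"
proof -
  define G where "G = {k::nat. \<bar>real k - mu\<bar> \<le> 4 * s \<and> int d dvd int k - c}"
  have sp: "s > 0" using s(2) by simp
  have fin: "finite G" and cd: "real (card G) \<le> 2 * (4 * s) / real d + 1"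
    using card_window[OF d, of "4 * s" mu c] sp by (simp_all add: G_def)
  have "measure_pmf.prob (binomial_pmf l q) G = sum (pmf (binomial_pmf l q)) G"
    using fin by (simp add: measure_measure_pmf_finite)
  also have "\<dots> \<le> (\<Sum>k\<in>G. 12 / s)" by (intro sum_mono bin_max[OF q s])
  also have "\<dots> = real (card G) * (12 / s)" by simp
  also have "\<dots> \<le> (2 * (4 * s) / real d + 1) * (12 / s)" using cd sp by (intro mult_right_mono) auto
  also have "\<dots> = 96 / real d + 12 / s" using sp d by (simp add: field_simps)
  finally have m1: "measure_pmf.prob (binomial_pmf l q) G \<le> 96 / real d + 12 / s" .
  have "measure_pmf.prob (binomial_pmf l q) G ^ 2 \<le> (96 / real d + 12 / s)^2"
    using m1 by (intro power_mono) auto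
  also have "\<dots> \<le> 2 * (96 / real d)^2 + 2 * (12 / s)^2"
    using sum_squares_bound[of "96 / real d" "12 / s"] by (simp add: power2_eq_square algebra_simps)
  also have "\<dots> = 18432 / (real d)^2 + 288 / s^2" by (simp add: power_divide)
  finally show ?thesis by (simp add: G_def)
qed



lemma bin_pair:
  fixes c :: int
  assumes q: "0 \<le> q" "q \<le> 1" and V: "real l * q * (1-q) \<ge> 2^120"
  shows "measure_pmf.prob (pair_pmf (binomial_pmf l q) (binomial_pmf l q))
           {p. gcd (int (fst p) - c) (int (snd p) - c) \<noteq> 1} \<le> 15/16"
proof -
  define B where "B = binomial_pmf l q"
  define s where "s = sqrt (real l * q * (1-q))"
  define mu where "mu = real l * q"
  define P0 :: nat where "P0 = 2^20"
  define D where "D = nat \<lfloor>8 * s\<rfloor>"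
  define W where "W = {k::nat. \<bar>real k - mu\<bar> \<le> 4 * s}"
  define G where "G d = {k::nat. \<bar>real k - mu\<bar> \<le> 4 * s \<and> int d dvd int k - c}" for d :: nat
  have q0: "q \<noteq> 0" using V by auto
  have q1: "q \<noteq> 1" using V by auto
  have qs: "0 < q" "q < 1" using q q0 q1 by auto
  have s60: "s \<ge> 2^60" unfolding s_def by (rule real_le_rsqrt) (use V in simp)
  have s6: "s \<ge> 6" using s60 by simp
  have sp: "s > 0" using s6 by simp
  have sdef: "s = sqrt (real l * q * (1-q))" by (simp add: s_def)
  have incl: "{p. gcd (int (fst p) - c) (int (snd p) - c) \<noteq> 1} \<subseteq>
      ((- W) \<times> UNIV \<union> UNIV \<times> (- W)) \<union> {p. fst p = snd p} \<union> (\<Union>d\<in>{2..D}. G d \<times> G d)"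
  proof
    fix p assume "p \<in> {p. gcd (int (fst p) - c) (int (snd p) - c) \<noteq> 1}"
    then obtain k k' where p: "p = (k, k')" and g1: "gcd (int k - c) (int k' - c) \<noteq> 1"
      by (cases p) auto
    show "p \<in> ((- W) \<times> UNIV \<union> UNIV \<times> (- W)) \<union> {p. fst p = snd p} \<union> (\<Union>d\<in>{2..D}. G d \<times> G d)"
    proof (cases "k \<in> W \<and> k' \<in> W \<and> k \<noteq> k'")
      case False
      then show ?thesis using p by auto
    next
      case True
      define g where "g = gcd (int k - c) (int k' - c)"
      have g0: "g \<ge> 0" by (simp add: g_def)
      have gn0: "g \<noteq> 0"
      proof
        assume "g = 0"
        hence "int k - c = 0" "int k' - c = 0" by (auto simp: g_def)
        hence "k = k'" by simp
        thus False using True by simp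
      qed
      have "g \<noteq> 1" using g1 by (simp add: g_def)
      hence g2: "g \<ge> 2" using g0 gn0 by linarith
      have "g dvd (int k - c) - (int k' - c)" unfolding g_def by (rule dvd_diff) (rule gcd_dvd1, rule gcd_dvd2)
      hence "g dvd \<bar>int k - int k'\<bar>" by simp
      moreover have "\<bar>int k - int k'\<bar> > 0" using True by simp
      ultimately have gle: "g \<le> \<bar>int k - int k'\<bar>" by (intro zdvd_imp_le)
      have "\<bar>real k - real k'\<bar> \<le> 8 * s" using True by (auto simp: W_def)
      hence "real_of_int \<bar>int k - int k'\<bar> \<le> 8 * s" by simp
      hence "real_of_int g \<le> 8 * s" using gle by linarith
      hence "g \<le> \<lfloor>8 * s\<rfloor>" by (simp add: le_floor_iff)
      hence dD: "nat g \<le> D" by (simp add: D_def nat_mono)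
      have "int (nat g) = g" using g0 by simp
      hence dv1: "int (nat g) dvd int k - c" and dv2: "int (nat g) dvd int k' - c"
        by (simp_all add: g_def)
      have "nat g \<in> {2..D}" using g2 dD by auto
      moreover have "k \<in> G (nat g)" "k' \<in> G (nat g)" using True dv1 dv2 by (auto simp: G_def W_def)
      ultimately show ?thesis using p by blast
    qed
  qed
  have negW: "- W = {k. \<bar>real k - real l * q\<bar> > 4 * sqrt (real l * q * (1-q))}"
    by (auto simp: W_def mu_def s_def)
  have tail: "measure_pmf.prob B (- W) \<le> 1/16"
    unfolding negW B_def using bin_cheb[OF q, of 4 l] V by simp
  have t1: "measure_pmf.prob (pair_pmf B B) ((- W) \<times> UNIV) \<le> 1/16"
    using tail by (subst measure_pmf_prob_product) auto
  have t2: "measure_pmf.prob (pair_pmf B B) (UNIV \<times> (- W)) \<le> 1/16"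
    using tail by (subst measure_pmf_prob_product) auto
  have t3: "measure_pmf.prob (pair_pmf B B) {p. fst p = snd p} \<le> 12 / s"
    unfolding B_def by (rule bin_diag[OF qs sdef s6])
  have sq: "measure_pmf.prob (pair_pmf B B) (G d \<times> G d) = measure_pmf.prob B (G d) ^ 2" for d
    by (subst measure_pmf_prob_product) (auto simp: power2_eq_square)
  define h where "h d = measure_pmf.prob B (G d) ^ 2" for d
  define Mx where "Mx = max D P0"
  have t4a: "(\<Sum>d\<in>{2..D}. h d) \<le> (\<Sum>d\<in>{2..Mx}. h d)"
    by (intro sum_mono2) (auto simp: Mx_def h_def)
  have split: "{2..Mx} = {2..P0} \<union> {Suc P0..Mx}" by (auto simp: Mx_def P0_def)
  have "(\<Sum>d\<in>{2..Mx}. h d) = (\<Sum>d\<in>{2..P0}. h d) + (\<Sum>d\<in>{Suc P0..Mx}. h d)"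
    unfolding split by (rule sum.union_disjoint) auto
  also have "(\<Sum>d\<in>{2..P0}. h d) \<le> (\<Sum>d\<in>{2..P0}. 1 / (real d)^2 + 72 * real P0 / s)"
  proof (intro sum_mono)
    fix d assume d: "d \<in> {2..P0}"
    have "24 * real P0 \<le> s" using s60 by (simp add: P0_def)
    then show "h d \<le> 1 / (real d)^2 + 72 * real P0 / s"
      unfolding h_def B_def using d by (intro bin_small_d[OF qs sdef s6, of d P0 "G d" c]) (auto simp: G_def)
  qed
  also have "(\<Sum>d\<in>{Suc P0..Mx}. h d) \<le> (\<Sum>d\<in>{Suc P0..Mx}. 18432 / (real d)^2 + 288 / s^2)"
  proof (intro sum_mono)
    fix d assume d: "d \<in> {Suc P0..Mx}"
    then show "h d \<le> 18432 / (real d)^2 + 288 / s^2"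
      unfolding h_def B_def G_def by (intro bin_large_d[OF qs sdef s6]) auto
  qed
  finally have t4b: "(\<Sum>d\<in>{2..Mx}. h d) \<le> (\<Sum>d\<in>{2..P0}. 1 / (real d)^2 + 72 * real P0 / s)
      + (\<Sum>d\<in>{Suc P0..Mx}. 18432 / (real d)^2 + 288 / s^2)" by simp
  have "(\<Sum>d\<in>{2..P0}. 1 / (real d)^2) = 1/4 + (\<Sum>d\<in>{Suc 2..P0}. 1 / (real d)^2)"
  proof -
    have "{2..P0} = insert 2 {Suc 2..P0}" by (auto simp: P0_def)
    thus ?thesis by simp
  qed
  also have "(\<Sum>d\<in>{Suc 2..P0}. 1 / (real d)^2) \<le> 1 / 2" using inv_sq_sum[of 2 P0] by simp
  finally have u1: "(\<Sum>d\<in>{2..P0}. 1 / (real d)^2) \<le> 3/4" by simp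
  have u2: "(\<Sum>d\<in>{2..P0}. 72 * real P0 / s) \<le> real P0 * (72 * real P0 / s)"
  proof -
    have "(\<Sum>d\<in>{2..P0}. 72 * real P0 / s) = real (card {2..P0}) * (72 * real P0 / s)" by simp
    also have "\<dots> \<le> real P0 * (72 * real P0 / s)" using sp by (intro mult_right_mono) auto
    finally show ?thesis .
  qed
  have u3: "(\<Sum>d\<in>{Suc P0..Mx}. 18432 / (real d)^2) \<le> 18432 / real P0"
  proof -
    have "(\<Sum>d\<in>{Suc P0..Mx}. 18432 / (real d)^2) = 18432 * (\<Sum>d\<in>{Suc P0..Mx}. 1 / (real d)^2)"
      by (simp add: sum_distrib_left)
    also have "\<dots> \<le> 18432 * (1 / real P0)"
      using inv_sq_sum[of P0 Mx] by (intro mult_left_mono) (auto simp: P0_def)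
    finally show ?thesis by simp
  qed
  have cardMx: "real (card {Suc P0..Mx}) \<le> 8 * s"
  proof -
    have "card {Suc P0..Mx} \<le> D" by (simp add: Mx_def)
    moreover have "real D \<le> 8 * s" using sp by (simp add: D_def)
    ultimately show ?thesis by linarith
  qed
  have u4: "(\<Sum>d\<in>{Suc P0..Mx}. 288 / s^2) \<le> 8 * s * (288 / s^2)"
  proof -
    have "(\<Sum>d\<in>{Suc P0..Mx}. 288 / s^2) = real (card {Suc P0..Mx}) * (288 / s^2)" by (simp only: sum_constant)
    also have "\<dots> \<le> 8 * s * (288 / s^2)" using cardMx sp by (intro mult_right_mono) auto
    finally show ?thesis .
  qed
  have u4': "8 * s * (288 / s^2) = 2304 / s" using sp by (simp add: power2_eq_square)
  have t4: "(\<Sum>d\<in>{2..D}. h d) \<le> 3/4 + real P0 * (72 * real P0 / s) + 18432 / real P0 + 2304 / s"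
    using t4a t4b u1 u2 u3 u4 u4' by (simp add: sum.distrib)
  have meas: "measure_pmf.prob (pair_pmf B B) {p. gcd (int (fst p) - c) (int (snd p) - c) \<noteq> 1}
      \<le> 1/16 + 1/16 + 12 / s + (\<Sum>d\<in>{2..D}. h d)"
  proof -
    have "measure_pmf.prob (pair_pmf B B) {p. gcd (int (fst p) - c) (int (snd p) - c) \<noteq> 1}
       \<le> measure_pmf.prob (pair_pmf B B) (((- W) \<times> UNIV \<union> UNIV \<times> (- W)) \<union> {p. fst p = snd p} \<union> (\<Union>d\<in>{2..D}. G d \<times> G d))"
      using incl by (intro measure_pmf.finite_measure_mono) auto
    also have "\<dots> \<le> measure_pmf.prob (pair_pmf B B) (((- W) \<times> UNIV \<union> UNIV \<times> (- W)) \<union> {p. fst p = snd p})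
        + measure_pmf.prob (pair_pmf B B) (\<Union>d\<in>{2..D}. G d \<times> G d)"
      by (rule measure_Un_le) auto
    also have "measure_pmf.prob (pair_pmf B B) (((- W) \<times> UNIV \<union> UNIV \<times> (- W)) \<union> {p. fst p = snd p})
        \<le> measure_pmf.prob (pair_pmf B B) ((- W) \<times> UNIV \<union> UNIV \<times> (- W)) + measure_pmf.prob (pair_pmf B B) {p. fst p = snd p}"
      by (rule measure_Un_le) auto
    also have "measure_pmf.prob (pair_pmf B B) ((- W) \<times> UNIV \<union> UNIV \<times> (- W))
        \<le> measure_pmf.prob (pair_pmf B B) ((- W) \<times> UNIV) + measure_pmf.prob (pair_pmf B B) (UNIV \<times> (- W))"
      by (rule measure_Un_le) auto
    also have "measure_pmf.prob (pair_pmf B B) (\<Union>d\<in>{2..D}. G d \<times> G d) \<le> (\<Sum>d\<in>{2..D}. measure_pmf.prob (pair_pmf B B) (G d \<times> G d))"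
      by (rule measure_pmf.finite_measure_subadditive_finite) auto
    also have "\<dots> = (\<Sum>d\<in>{2..D}. h d)" by (simp add: sq h_def)
    finally show ?thesis using t1 t2 t3 by linarith
  qed
  have fin: "12 / s + real P0 * (72 * real P0 / s) + 2304 / s \<le> 1/32"
  proof -
    have "12 / s + real P0 * (72 * real P0 / s) + 2304 / s = (12 + 72 * real P0 * real P0 + 2304) / s"
      by (simp add: add_divide_distrib)
    also have "\<dots> \<le> (12 + 72 * real P0 * real P0 + 2304) / 2^60"
      using s60 by (intro divide_left_mono) auto
    also have "\<dots> \<le> 1/32" by (simp add: P0_def)
    finally show ?thesis .
  qed
  have fin2: "18432 / real P0 \<le> 1/32" by (simp add: P0_def)
  show ?thesis using meas t4 fin fin2 by (simp add: B_def)
qed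



lemma pair_sum_fst:
  fixes A :: "'a pmf" and C :: "'b pmf"
  assumes "finite F" "finite H" "set_pmf A \<subseteq> F" "set_pmf C \<subseteq> H"
  shows "measure_pmf.prob (pair_pmf A C) E = (\<Sum>x\<in>F. pmf A x * measure_pmf.prob C {y. (x, y) \<in> E})"
    and "measure_pmf.prob (pair_pmf A C) E = (\<Sum>y\<in>H. pmf C y * measure_pmf.prob A {x. (x, y) \<in> E})"
proof -
  have sP: "set_pmf (pair_pmf A C) \<subseteq> F \<times> H" using assms by auto
  have base: "measure_pmf.prob (pair_pmf A C) E = (\<Sum>x\<in>F. \<Sum>y\<in>H. pmf A x * (pmf C y * indicator E (x, y)))"
  proof -
    have "measure_pmf.prob (pair_pmf A C) E = (\<Sum>p\<in>F \<times> H. pmf (pair_pmf A C) p * indicator E p)"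
      by (rule measure_pmf_sum_F[OF _ sP]) (use assms in simp)
    also have "\<dots> = (\<Sum>p\<in>F \<times> H. pmf A (fst p) * (pmf C (snd p) * indicator E p))"
      by (intro sum.cong refl) (auto simp: pmf_pair)
    also have "\<dots> = (\<Sum>x\<in>F. \<Sum>y\<in>H. pmf A x * (pmf C y * indicator E (x, y)))"
      by (subst sum.cartesian_product) (simp add: case_prod_unfold)
    finally show ?thesis .
  qed
  show "measure_pmf.prob (pair_pmf A C) E = (\<Sum>x\<in>F. pmf A x * measure_pmf.prob C {y. (x, y) \<in> E})"
    unfolding base
  proof (intro sum.cong refl)
    fix x assume "x \<in> F"
    have "measure_pmf.prob C {y. (x, y) \<in> E} = (\<Sum>y\<in>H. pmf C y * indicator {y. (x, y) \<in> E} y)"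
      by (rule measure_pmf_sum_F) (use assms in auto)
    then show "(\<Sum>y\<in>H. pmf A x * (pmf C y * indicator E (x, y))) = pmf A x * measure_pmf.prob C {y. (x, y) \<in> E}"
      by (simp add: sum_distrib_left indicator_def)
  qed
  show "measure_pmf.prob (pair_pmf A C) E = (\<Sum>y\<in>H. pmf C y * measure_pmf.prob A {x. (x, y) \<in> E})"
    unfolding base
    apply (subst sum.swap)
  proof (intro sum.cong refl)
    fix y assume "y \<in> H"
    have "measure_pmf.prob A {x. (x, y) \<in> E} = (\<Sum>x\<in>F. pmf A x * indicator {x. (x, y) \<in> E} x)"
      by (rule measure_pmf_sum_F) (use assms in auto)
    then show "(\<Sum>x\<in>F. pmf A x * (pmf C y * indicator E (x, y))) = pmf C y * measure_pmf.prob A {x. (x, y) \<in> E}"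
      by (simp add: sum_distrib_left indicator_def mult_ac)
  qed
qed

lemma pair_tv:
  fixes P Q :: "'a pmf"
  assumes F: "finite F" "set_pmf P \<subseteq> F" "set_pmf Q \<subseteq> F"
    and tv: "\<And>X. \<bar>measure_pmf.prob P X - measure_pmf.prob Q X\<bar> \<le> e"
  shows "measure_pmf.prob (pair_pmf P P) E \<le> measure_pmf.prob (pair_pmf Q Q) E + 2 * e"
proof -
  have e0: "e \<ge> 0" using tv[of "{}"] by simp
  have a1: "measure_pmf.prob (pair_pmf P P) E = (\<Sum>y\<in>F. pmf P y * measure_pmf.prob P {x. (x, y) \<in> E})"
    by (rule pair_sum_fst(2)[OF F(1) F(1) F(2) F(2)])
  have a2: "measure_pmf.prob (pair_pmf Q P) E = (\<Sum>y\<in>F. pmf P y * measure_pmf.prob Q {x. (x, y) \<in> E})"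
    by (rule pair_sum_fst(2)[OF F(1) F(1) F(3) F(2)])
  have a3: "measure_pmf.prob (pair_pmf Q P) E = (\<Sum>x\<in>F. pmf Q x * measure_pmf.prob P {y. (x, y) \<in> E})"
    by (rule pair_sum_fst(1)[OF F(1) F(1) F(3) F(2)])
  have a4: "measure_pmf.prob (pair_pmf Q Q) E = (\<Sum>x\<in>F. pmf Q x * measure_pmf.prob Q {y. (x, y) \<in> E})"
    by (rule pair_sum_fst(1)[OF F(1) F(1) F(3) F(3)])
  have "measure_pmf.prob (pair_pmf P P) E - measure_pmf.prob (pair_pmf Q P) E
      = (\<Sum>y\<in>F. pmf P y * (measure_pmf.prob P {x. (x, y) \<in> E} - measure_pmf.prob Q {x. (x, y) \<in> E}))"
    unfolding a1 a2 by (simp add: sum_subtractf[symmetric] right_diff_distrib)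
  also have "\<dots> \<le> (\<Sum>y\<in>F. pmf P y * e)"
    using tv by (intro sum_mono mult_left_mono) (auto simp: abs_le_iff)
  also have "\<dots> = measure_pmf.prob P F * e"
    using F(1) by (simp only: sum_distrib_right[symmetric] measure_measure_pmf_finite)
  also have "\<dots> \<le> 1 * e" using e0 by (intro mult_right_mono) auto
  finally have b1: "measure_pmf.prob (pair_pmf P P) E - measure_pmf.prob (pair_pmf Q P) E \<le> e" by simp
  have "measure_pmf.prob (pair_pmf Q P) E - measure_pmf.prob (pair_pmf Q Q) E
      = (\<Sum>x\<in>F. pmf Q x * (measure_pmf.prob P {y. (x, y) \<in> E} - measure_pmf.prob Q {y. (x, y) \<in> E}))"
    unfolding a3 a4 by (simp add: sum_subtractf[symmetric] right_diff_distrib)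
  also have "\<dots> \<le> (\<Sum>x\<in>F. pmf Q x * e)"
    using tv by (intro sum_mono mult_left_mono) (auto simp: abs_le_iff)
  also have "\<dots> = measure_pmf.prob Q F * e"
    using F(1) by (simp only: sum_distrib_right[symmetric] measure_measure_pmf_finite)
  also have "\<dots> \<le> 1 * e" using e0 by (intro mult_right_mono) auto
  finally have b2: "measure_pmf.prob (pair_pmf Q P) E - measure_pmf.prob (pair_pmf Q Q) E \<le> e" by simp
  show ?thesis using b1 b2 by linarith
qed

lemma tv_le:
  assumes "tv_dist P Q \<le> e"
  shows "\<bar>measure_pmf.prob P X - measure_pmf.prob Q X\<bar> \<le> e"
proof -
  have "\<bar>measure_pmf.prob P X - measure_pmf.prob Q X\<bar> \<le> (SUP A. \<bar>measure_pmf.prob P A - measure_pmf.prob Q A\<bar>)"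
  proof (rule cSUP_upper)
    show "bdd_above (range (\<lambda>A. \<bar>measure_pmf.prob P A - measure_pmf.prob Q A\<bar>))"
    proof (rule bdd_aboveI2)
      fix A
      have "measure_pmf.prob P A \<le> 1" "measure_pmf.prob Q A \<le> 1" "measure_pmf.prob P A \<ge> 0" "measure_pmf.prob Q A \<ge> 0"
        by simp_all
      then show "\<bar>measure_pmf.prob P A - measure_pmf.prob Q A\<bar> \<le> 1" by linarith
    qed
  qed simp
  then show ?thesis using assms by (simp add: tv_dist_def)
qed

lemma set_pbd: "set_pmf (pbd ps) \<subseteq> {..length ps}"
proof (induction ps)
  case Nil then show ?case by simp
next
  case (Cons p ps)
  then show ?case by (fastforce simp: set_bind_pmf)
qed

lemma measure_pair_prod:
  fixes A :: "'a pmf" and B :: "'b pmf"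
  shows "measure_pmf.prob (pair_pmf A B) (X \<times> Y) = measure_pmf.prob A X * measure_pmf.prob B Y"
proof -
  have "measure_pmf.prob (pair_pmf A B) (X \<times> Y) = measure_pmf.prob (pair_pmf A B) ((X \<times> Y) \<inter> set_pmf (pair_pmf A B))"
    by (rule measure_Int_set_pmf[symmetric])
  also have "(X \<times> Y) \<inter> set_pmf (pair_pmf A B) = (X \<inter> set_pmf A) \<times> (Y \<inter> set_pmf B)" by auto
  also have "measure_pmf.prob (pair_pmf A B) \<dots> = measure_pmf.prob A (X \<inter> set_pmf A) * measure_pmf.prob B (Y \<inter> set_pmf B)"
    by (rule measure_pmf_prob_product) (auto intro: countable_subset[OF _ countable_set_pmf])
  also have "\<dots> = measure_pmf.prob A X * measure_pmf.prob B Y" by (simp add: measure_Int_set_pmf)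
  finally show ?thesis .
qed

lemma pow_bound:
  fixes x :: real
  assumes "0 < x" "x \<le> 1" "n > 0"
  shows "(1 - x)^n \<le> 1 / (real n * x)"
proof -
  have "1 - x \<le> exp (-x)" using exp_ge_add_one_self[of "-x"] by simp
  hence "(1 - x)^n \<le> exp (-x)^n" using assms by (intro power_mono) auto
  also have "\<dots> = exp (- (real n * x))" by (simp add: exp_of_nat_mult[symmetric])
  also have "\<dots> = 1 / exp (real n * x)" by (simp add: exp_minus field_simps)
  also have "\<dots> \<le> 1 / (real n * x)"
  proof -
    have "real n * x \<le> exp (real n * x)" using exp_ge_add_one_self[of "real n * x"] by linarith
    moreover have "real n * x > 0" using assms by simp
    ultimately show ?thesis by (intro divide_left_mono) auto
  qed
  finally show ?thesis .
qed



lemma pi_pairs: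
  fixes Q :: "'b pmf" and Bad :: "('b \<times> 'b) set"
  assumes sym: "\<And>x y. (x, y) \<in> Bad \<longleftrightarrow> (y, x) \<in> Bad"
  shows "measure_pmf.prob (Pi_pmf {..<2*n} dflt (\<lambda>_. Q)) {v. \<forall>j<n. (v (2*j), v (2*j+1)) \<in> Bad}
         = measure_pmf.prob (pair_pmf Q Q) Bad ^ n"
proof (induction n)
  case 0
  then show ?case by simp
next
  case (Suc n)
  define R where "R = Pi_pmf {..<2*n} dflt (\<lambda>_. Q)"
  define En where "En = {v. \<forall>j<n. (v (2*j), v (2*j+1)) \<in> Bad}"
  define H where "H = (\<lambda>((x, y), f). (f(2*n := y))(2*n+1 := (x::'b)))"
  have set: "{..<2 * Suc n} = insert (2*n+1) (insert (2*n) {..<2*n})" by auto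
  have "Pi_pmf {..<2 * Suc n} dflt (\<lambda>_. Q) =
        map_pmf (\<lambda>(y, f). f(2*n+1 := y)) (pair_pmf Q (Pi_pmf (insert (2*n) {..<2*n}) dflt (\<lambda>_. Q)))"
    unfolding set by (subst Pi_pmf_insert) auto
  also have "Pi_pmf (insert (2*n) {..<2*n}) dflt (\<lambda>_. Q) = map_pmf (\<lambda>(y, f). f(2*n := y)) (pair_pmf Q R)"
    unfolding R_def by (subst Pi_pmf_insert) auto
  also have "pair_pmf Q (map_pmf (\<lambda>(y, f). f(2*n := y)) (pair_pmf Q R))
      = map_pmf (apsnd (\<lambda>(y, f). f(2*n := y))) (pair_pmf Q (pair_pmf Q R))"
    by (rule pair_map_pmf2)
  also have "pair_pmf Q (pair_pmf Q R) = map_pmf (\<lambda>((x, y), z). (x, (y, z))) (pair_pmf (pair_pmf Q Q) R)"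
    by (simp add: pair_pair_pmf pmf.map_comp o_def case_prod_unfold)
  also have "map_pmf (\<lambda>(y, f). f(2*n+1 := y)) (map_pmf (apsnd (\<lambda>(y, f). f(2*n := y)))
      (map_pmf (\<lambda>((x, y), z). (x, (y, z))) (pair_pmf (pair_pmf Q Q) R))) = map_pmf H (pair_pmf (pair_pmf Q Q) R)"
    unfolding pmf.map_comp by (intro map_pmf_cong refl) (auto simp: H_def)
  finally have eq: "Pi_pmf {..<2 * Suc n} dflt (\<lambda>_. Q) = map_pmf H (pair_pmf (pair_pmf Q Q) R)" .
  have pre: "H -` {v. \<forall>j<Suc n. (v (2*j), v (2*j+1)) \<in> Bad} = Bad \<times> En"
  proof (intro set_eqI iffI)
    fix z assume z: "z \<in> H -` {v. \<forall>j<Suc n. (v (2*j), v (2*j+1)) \<in> Bad}"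
    obtain x y f where zz: "z = ((x, y), f)" by (metis prod.collapse)
    have all: "\<forall>j<Suc n. ((H z) (2*j), (H z) (2*j+1)) \<in> Bad" using z by simp
    have "(y, x) \<in> Bad" using all[rule_format, of n] by (simp add: zz H_def)
    hence "(x, y) \<in> Bad" using sym by simp
    moreover have "f \<in> En"
    proof -
      have "(f (2*j), f (2*j+1)) \<in> Bad" if "j < n" for j
        using all[rule_format, of j] that by (simp add: zz H_def)
      thus ?thesis by (simp add: En_def)
    qed
    ultimately show "z \<in> Bad \<times> En" by (simp add: zz)
  next
    fix z assume z: "z \<in> Bad \<times> En"
    obtain x y f where zz: "z = ((x, y), f)" by (metis prod.collapse)
    have xy: "(y, x) \<in> Bad" using z sym by (simp add: zz)
    have fE: "\<forall>j<n. (f (2*j), f (2*j+1)) \<in> Bad" using z by (simp add: zz En_def)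
    have "((H z) (2*j), (H z) (2*j+1)) \<in> Bad" if "j < Suc n" for j
    proof (cases "j = n")
      case True then show ?thesis using xy by (simp add: zz H_def)
    next
      case False
      hence "j < n" using that by simp
      then show ?thesis using fE by (simp add: zz H_def)
    qed
    then show "z \<in> H -` {v. \<forall>j<Suc n. (v (2*j), v (2*j+1)) \<in> Bad}" by simp
  qed
  have "measure_pmf.prob (Pi_pmf {..<2 * Suc n} dflt (\<lambda>_. Q)) {v. \<forall>j<Suc n. (v (2*j), v (2*j+1)) \<in> Bad}
      = measure_pmf.prob (pair_pmf (pair_pmf Q Q) R) (Bad \<times> En)"
    by (simp only: eq measure_map_pmf pre)
  also have "\<dots> = measure_pmf.prob (pair_pmf Q Q) Bad * measure_pmf.prob R En"
    by (rule measure_pair_prod)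
  also have "measure_pmf.prob R En = measure_pmf.prob (pair_pmf Q Q) Bad ^ n"
    using Suc.IH by (simp add: R_def En_def)
  finally show ?case by simp
qed



lemma gcd_scale:
  fixes a x y :: int
  assumes "a > 0"
  shows "gcd (a * x) (a * y) = a \<longleftrightarrow> gcd x y = 1"
proof -
  have "gcd (a * x) (a * y) = a * gcd x y"
    using assms by (simp add: gcd_mult_left abs_mult)
  then show ?thesis using assms by simp
qed

lemma gcd_from_pair:
  fixes v :: "nat \<Rightarrow> int" and a :: int
  assumes a: "a > 0" and dv: "\<And>i. i < m \<Longrightarrow> a dvd v i" and i: "i < m" "i' < m"
    and g: "gcd (v i) (v i') = a"
  shows "Gcd (v ` {..<m}) = a"
proof (rule zdvd_antisym_nonneg)
  show "0 \<le> Gcd (v ` {..<m})" by simp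
  show "0 \<le> a" using a by simp
  have "Gcd (v ` {..<m}) dvd v i" using i by (intro Gcd_dvd) auto
  moreover have "Gcd (v ` {..<m}) dvd v i'" using i by (intro Gcd_dvd) auto
  ultimately have "Gcd (v ` {..<m}) dvd gcd (v i) (v i')" by simp
  then show "Gcd (v ` {..<m}) dvd a" using g by simp
  show "a dvd Gcd (v ` {..<m})" using dv by (intro Gcd_greatest) auto
qed

theorem proposition54:
  fixes c0 :: real
  assumes "c0 > 0"
  shows "\<exists>eps0 > 0. \<exists>C > 0. \<exists>c1 > 0. \<forall>(eps::real) (ps::real list) (a::int) (b::int) (m::nat).
           0 < eps \<and> eps \<le> eps0 \<and> (\<forall>p\<in>set ps. 0 \<le> p \<and> p \<le> 1) \<and>
           heavy_binomial_form c0 eps (length ps) (pbd ps) \<and> a > 0 \<and> real m \<ge> c1 / sqrt eps \<longrightarrow>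
           measure_pmf.prob
             (Pi_pmf {..<m} 0 (\<lambda>_. map_pmf (\<lambda>s. a * (int s - b)) (pbd ps)))
             {v. Gcd (v ` {..<m}) = a} \<ge> 1 - C * sqrt eps"
proof -
  define eps0 where "eps0 = min (1/64) (sqrt c0 / 2^60)"
  have eps0p: "eps0 > 0" using assms by (simp add: eps0_def)
  have main: "\<forall>(eps::real) (ps::real list) (a::int) (b::int) (m::nat).
           0 < eps \<and> eps \<le> eps0 \<and> (\<forall>p\<in>set ps. 0 \<le> p \<and> p \<le> 1) \<and>
           heavy_binomial_form c0 eps (length ps) (pbd ps) \<and> a > 0 \<and> real m \<ge> 4 / sqrt eps \<longrightarrow>
           measure_pmf.prob
             (Pi_pmf {..<m} 0 (\<lambda>_. map_pmf (\<lambda>s. a * (int s - b)) (pbd ps)))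
             {v. Gcd (v ` {..<m}) = a} \<ge> 1 - 32 * sqrt eps"
  proof (intro allI impI)
    fix eps :: real and ps :: "real list" and a b :: int and m :: nat
    assume H: "0 < eps \<and> eps \<le> eps0 \<and> (\<forall>p\<in>set ps. 0 \<le> p \<and> p \<le> 1) \<and>
           heavy_binomial_form c0 eps (length ps) (pbd ps) \<and> a > 0 \<and> real m \<ge> 4 / sqrt eps"
    have ep: "0 < eps" and e64: "eps \<le> 1/64" and ec: "eps \<le> sqrt c0 / 2^60"
      and hb: "heavy_binomial_form c0 eps (length ps) (pbd ps)" and a: "a > 0"
      and mb: "real m \<ge> 4 / sqrt eps"
      using H by (auto simp: eps0_def)
    obtain u l q where uN: "u \<le> length ps" and lN: "l \<le> length ps" and q: "0 \<le> q" "q \<le> 1"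
      and tv: "tv_dist (pbd ps) (map_pmf (\<lambda>k. u + k) (binomial_pmf l q)) \<le> eps"
      and V0: "real l * q * (1 - q) \<ge> c0 / eps^2"
      using hb unfolding heavy_binomial_form_def by blast
    have "eps * 2^60 \<le> sqrt c0" using ec by (simp add: field_simps)
    hence "(eps * 2^60)^2 \<le> (sqrt c0)^2" using ep by (intro power_mono) auto
    hence "eps^2 * 2^120 \<le> c0" using assms by (simp add: power_mult_distrib)
    hence "2^120 \<le> c0 / eps^2" using ep by (simp add: field_simps)
    hence V: "real l * q * (1 - q) \<ge> 2^120" using V0 by linarith
    define S where "S = pbd ps"
    define Y where "Y = map_pmf (\<lambda>k. u + k) (binomial_pmf l q)"
    define g where "g s = a * (int s - b)" for s :: nat
    define Qa where "Qa = map_pmf g S"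
    define Bad where "Bad = {p :: int \<times> int. gcd (fst p) (snd p) \<noteq> a}"
    define BadS where "BadS = {p. gcd (g (fst p)) (g (snd p)) \<noteq> a}"
    define c where "c = b - int u"
    define beta where "beta = measure_pmf.prob (pair_pmf Qa Qa) Bad"
    have b1: "beta = measure_pmf.prob (pair_pmf S S) BadS"
    proof -
      have "pair_pmf Qa Qa = map_pmf (\<lambda>(x, y). (g x, g y)) (pair_pmf S S)"
        by (simp add: Qa_def map_pair)
      then show ?thesis by (simp add: beta_def Bad_def BadS_def case_prod_unfold vimage_def)
    qed
    define F where "F = {..length ps + u + l}"
    have sS: "set_pmf S \<subseteq> F" using set_pbd[of ps] by (auto simp: S_def F_def)
    have sY: "set_pmf Y \<subseteq> F" using bin_set[OF q, of l] by (auto simp: Y_def F_def)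
    have b2: "measure_pmf.prob (pair_pmf S S) BadS \<le> measure_pmf.prob (pair_pmf Y Y) BadS + 2 * eps"
      by (rule pair_tv[OF _ sS sY]) (use tv_le[OF tv] in \<open>simp_all add: S_def Y_def F_def\<close>)
    have b3: "measure_pmf.prob (pair_pmf Y Y) BadS =
        measure_pmf.prob (pair_pmf (binomial_pmf l q) (binomial_pmf l q)) {p. gcd (int (fst p) - c) (int (snd p) - c) \<noteq> 1}"
    proof -
      have "pair_pmf Y Y = map_pmf (\<lambda>(x, y). (u + x, u + y)) (pair_pmf (binomial_pmf l q) (binomial_pmf l q))"
        by (simp add: Y_def map_pair)
      hence "measure_pmf.prob (pair_pmf Y Y) BadS =
          measure_pmf.prob (pair_pmf (binomial_pmf l q) (binomial_pmf l q)) {p. (u + fst p, u + snd p) \<in> BadS}"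
        by (simp add: case_prod_unfold vimage_def)
      also have "{p. (u + fst p, u + snd p) \<in> BadS} = {p. gcd (int (fst p) - c) (int (snd p) - c) \<noteq> 1}"
      proof -
        have gg: "g (u + k) = a * (int k - c)" for k by (simp add: g_def c_def algebra_simps)
        show ?thesis by (auto simp: BadS_def gg gcd_scale[OF a])
      qed
      finally show ?thesis .
    qed
    have b4: "measure_pmf.prob (pair_pmf (binomial_pmf l q) (binomial_pmf l q))
        {p. gcd (int (fst p) - c) (int (snd p) - c) \<noteq> 1} \<le> 15/16"
      by (rule bin_pair[OF q V])
    have beta_le: "beta \<le> 31/32" using b1 b2 b3 b4 e64 by linarith
    have beta0: "beta \<ge> 0" by (simp add: beta_def)
    define n where "n = m div 2"
    define En where "En = {v :: nat \<Rightarrow> int. \<forall>j<n. (v (2*j), v (2*j+1)) \<in> Bad}"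
    define PI where "PI = Pi_pmf {..<m} 0 (\<lambda>_. Qa)"
    have PI_eq: "Pi_pmf {..<m} 0 (\<lambda>_. map_pmf (\<lambda>s. a * (int s - b)) (pbd ps)) = PI"
    proof -
      have "g = (\<lambda>s. a * (int s - b))" by (simp add: g_def fun_eq_iff)
      thus ?thesis by (simp add: PI_def Qa_def S_def)
    qed
    have sub: "{v. Gcd (v ` {..<m}) \<noteq> a} \<inter> set_pmf PI \<subseteq> En"
    proof
      fix v assume v: "v \<in> {v. Gcd (v ` {..<m}) \<noteq> a} \<inter> set_pmf PI"
      have dv: "a dvd v i" if "i < m" for i
      proof -
        have "v \<in> PiE_dflt {..<m} 0 (set_pmf \<circ> (\<lambda>_. Qa))" using v by (simp add: PI_def set_Pi_pmf)
        hence "v i \<in> set_pmf Qa" using that by (simp add: PiE_dflt_def)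
        then obtain s where "v i = g s" by (auto simp: Qa_def)
        thus ?thesis by (simp add: g_def)
      qed
      show "v \<in> En"
      proof (rule ccontr)
        assume "v \<notin> En"
        then obtain j where j: "j < n" "gcd (v (2*j)) (v (2*j+1)) = a" by (auto simp: En_def Bad_def)
        have "2*j+1 < m" "2*j < m" using j(1) by (auto simp: n_def)
        hence "Gcd (v ` {..<m}) = a" using gcd_from_pair[OF a dv _ _ j(2)] by blast
        thus False using v by simp
      qed
    qed
    have "measure_pmf.prob PI {v. Gcd (v ` {..<m}) \<noteq> a} = measure_pmf.prob PI ({v. Gcd (v ` {..<m}) \<noteq> a} \<inter> set_pmf PI)"
      by (rule measure_Int_set_pmf[symmetric])
    also have "\<dots> \<le> measure_pmf.prob PI En" using sub by (intro measure_pmf.finite_measure_mono) auto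
    also have "measure_pmf.prob PI En = measure_pmf.prob (Pi_pmf {..<2*n} 0 (\<lambda>_. Qa)) En"
    proof -
      have "Pi_pmf {..<2*n} 0 (\<lambda>_. Qa) = map_pmf (\<lambda>f x. if x \<in> {..<2*n} then f x else 0) PI"
        unfolding PI_def by (rule Pi_pmf_subset) (auto simp: n_def)
      moreover have "(\<lambda>f x. if x \<in> {..<2*n} then f x else 0) -` En = En"
        by (auto simp: En_def)
      ultimately show ?thesis by simp
    qed
    also have "\<dots> = beta ^ n" unfolding En_def beta_def
      by (rule pi_pairs) (auto simp: Bad_def gcd.commute)
    finally have comp: "measure_pmf.prob PI {v. Gcd (v ` {..<m}) \<noteq> a} \<le> beta ^ n" .
    have "measure_pmf.prob PI {v. Gcd (v ` {..<m}) = a} = 1 - measure_pmf.prob PI {v. Gcd (v ` {..<m}) \<noteq> a}"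
    proof -
      have "{v. Gcd (v ` {..<m}) = a} = UNIV - {v. Gcd (v ` {..<m}) \<noteq> a}" by auto
      thus ?thesis using measure_pmf.prob_compl[of "{v. Gcd (v ` {..<m}) \<noteq> a}" PI] by simp
    qed
    hence r1: "measure_pmf.prob PI {v. Gcd (v ` {..<m}) = a} \<ge> 1 - beta ^ n" using comp by linarith
    have se: "sqrt eps > 0" using ep by simp
    have se8: "sqrt eps \<le> 1/8"
    proof -
      have "sqrt eps \<le> sqrt (1/64)" using e64 by (rule real_sqrt_le_mono)
      also have "sqrt (1/64 :: real) = 1/8" by (simp add: real_sqrt_divide)
      finally show ?thesis .
    qed
    have "real m \<le> 2 * real n + 1" by (simp add: n_def)
    hence nge: "4 / sqrt eps - 1 \<le> 2 * real n" using mb by linarith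
    have "4 / sqrt eps - 1 \<ge> 2 / sqrt eps"
    proof -
      have "2 / sqrt eps \<ge> 2 / (1/8)" using se se8 by (intro divide_left_mono) auto
      thus ?thesis by simp
    qed
    moreover have "2 / sqrt eps = 2 * (1 / sqrt eps)" by simp
    ultimately have nge2: "real n \<ge> 1 / sqrt eps" using nge by linarith
    have np: "n > 0"
    proof -
      have "1 / sqrt eps > 0" using se by simp
      hence "real n > 0" using nge2 by linarith
      thus ?thesis by simp
    qed
    have "beta ^ n \<le> (31/32) ^ n" using beta0 beta_le by (intro power_mono) auto
    also have "(31/32 :: real) ^ n = (1 - 1/32) ^ n" by simp
    also have "\<dots> \<le> 1 / (real n * (1/32))" using np by (intro pow_bound) auto
    also have "\<dots> = 32 / real n" by simp
    also have "\<dots> \<le> 32 / (1 / sqrt eps)" using nge2 se np by (intro divide_left_mono) auto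
    also have "\<dots> = 32 * sqrt eps" by simp
    finally have "beta ^ n \<le> 32 * sqrt eps" .
    then show "measure_pmf.prob (Pi_pmf {..<m} 0 (\<lambda>_. map_pmf (\<lambda>s. a * (int s - b)) (pbd ps)))
             {v. Gcd (v ` {..<m}) = a} \<ge> 1 - 32 * sqrt eps"
      using r1 PI_eq by simp
  qed
  show ?thesis
    apply (rule exI[of _ eps0])
    apply (rule conjI[OF eps0p])
    apply (rule exI[of _ 32])
    apply (rule conjI, simp)
    apply (rule exI[of _ 4])
    apply (rule conjI, simp)
    using main by blast
qed


end
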